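(* Let $r\ge 2$, $n=2r$, $k=r$, $I=\{1,3,\dots,2r-1\}$, $J=\{2,4,\dots,2r\}$, and let $b_1,\dots,b_{2r}\in\mathbb{C}[[t]]$ with $\sum_{i=1}^{2r}b_i=0$. Let $X'$ be a subset of $\{0,2,4,\dots,2r-2\}$ with $1\le|X'|<r$, and let $X,Y$ be the $r$-subsets of $\{1,\dots,2r\}$ associated with $X'$ as in the context. Suppose that for every $j=0,1,\dots,r-1$ (with the even number $2r$ identified with $0$): $t\mid b_{2j+1}+b_{2j+2}$ if $2j$ and $2j+2$ are either both in $X'$ or both not in $X'$, and $t\nmid b_{2j+1}+b_{2j+2}$ if exactly one of $2j,2j+2$ lies in $X'$. Suppose further that $t\mid b_{p}+b_{p+1}+b_{q}+b_{q+1}$ whenever $p,q$ are two consecutive (in cyclic order) elements of the set of odd indices $i\in\{1,3,\dots,2r-1\}$ with $t\nmid b_i+b_{i+1}$. Then the module $\mathbb{M}(I,J)$ is isomorphic to $L_X\oplus L_Y$.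
   Context: $\Gamma_n$ is the quiver with vertices $1,\dots,n$ on a cycle (vertex $0$ identified with $n$), arrows $x_i\colon i-1\to i$, $y_i\colon i\to i-1$. $B_{k,n}$ is its completed path algebra modulo the closure of the ideal generated by $xy=yx$ and $x^k=y^{n-k}$ at every vertex; its centre is $\mathbb{C}[[t]]$, $t=\sum_ix_iy_i$. For a $k$-subset $S$ of $\{1,\dots,n\}$, the rank $1$ module $L_S$ has $\mathbb{C}[[t]]$ at every vertex, $x_i$ acting as multiplication by $1$ and $y_i$ by $t$ if $i\in S$, and $x_i$ by $t$ and $y_i$ by $1$ if $i\notin S$. Here $\mathbb{M}(I,J)$ is the module with $V_i=\mathbb{C}[[t]]^2$ at every vertex, $x_i=\begin{pmatrix}t&b_i\\0&1\end{pmatrix}$, $y_i=\begin{pmatrix}1&-b_i\\0&t\end{pmatrix}$ for odd $i$, and $x_i=\begin{pmatrix}1&b_i\\0&t\end{pmatrix}$, $y_i=\begin{pmatrix}t&-b_i\\0&1\end{pmatrix}$ for even $i$. The elements of $\{0,2,\dots,2r-2\}$ are the peaks of the rim $I$. Given $X'$, define $X\subset\{1,\dots,2r\}$ as follows: for each $j=0,\dots,r-1$ (with $2r\equiv 0$ for membership in $X'$): if $2j\in X'$ and $2j+2\in X'$, then $2j+1\in X$, $2j+2\notin X$; if $2j\notin X'$ and $2j+2\in X'$, then $2j+1,2j+2\notin X$; if $2j\in X'$ and $2j+2\notin X'$, then $2j+1,2j+2\in X$; if $2j\notin X'$ and $2j+2\notin X'$, then $2j+1\notin X$, $2j+2\in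 X$. Set $Y=\{1,\dots,2r\}\setminus X$ (equivalently, $Y$ is obtained by the same rule from the complement $Y'$ of $X'$ in the set of peaks). *)

theory Defs
  imports "HOL-Computational_Algebra.Formal_Power_Series" "Jordan_Normal_Form.Matrix"
begin

text \<open>Coefficient ring C[[t]] is \<open>complex fps\<close>, with t = fps_X.
  A rank-2 module over B_{k,n} (free over C[[t]] at every vertex of Gamma_n) is
  given by the 2x2 matrices of the arrows: xa i : V_{i-1} -> V_i and
  ya i : V_i -> V_{i-1}, for i = 1..n, where vertex 0 is vertex n.\<close>

type_synonym rep2 = "(nat \<Rightarrow> complex fps mat) \<times> (nat \<Rightarrow> complex fps mat)"

definition prev_vertex :: "nat \<Rightarrow> nat \<Rightarrow> nat" where
  "prev_vertex n i = (if i = 1 then n else i - 1)"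

definition rep2_iso :: "nat \<Rightarrow> rep2 \<Rightarrow> rep2 \<Rightarrow> bool" where
  "rep2_iso n M N \<longleftrightarrow>
     (\<exists>\<phi> :: nat \<Rightarrow> complex fps mat.
        (\<forall>i\<in>{1..n}. \<phi> i \<in> carrier_mat 2 2 \<and> invertible_mat (\<phi> i)) \<and>
        (\<forall>i\<in>{1..n}. \<phi> i * fst M i = fst N i * \<phi> (prev_vertex n i)) \<and>
        (\<forall>i\<in>{1..n}. \<phi> (prev_vertex n i) * snd M i = snd N i * \<phi> i))"

definition mat2 :: "'a \<Rightarrow> 'a \<Rightarrow> 'a \<Rightarrow> 'a \<Rightarrow> 'a mat" where
  "mat2 a b c d = mat_of_rows_list 2 [[a, b], [c, d]]"

definition MIJ :: "(nat \<Rightarrow> complex fps) \<Rightarrow> rep2" where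
  "MIJ b =
    ((\<lambda>i. if odd i then mat2 fps_X (b i) 0 1 else mat2 1 (b i) 0 fps_X),
     (\<lambda>i. if odd i then mat2 1 (- b i) 0 fps_X else mat2 fps_X (- b i) 0 1))"

definition LS_x :: "nat set \<Rightarrow> nat \<Rightarrow> complex fps" where
  "LS_x S i = (if i \<in> S then 1 else fps_X)"
definition LS_y :: "nat set \<Rightarrow> nat \<Rightarrow> complex fps" where
  "LS_y S i = (if i \<in> S then fps_X else 1)"

definition Lsum :: "nat set \<Rightarrow> nat set \<Rightarrow> rep2" where
  "Lsum S T =
    ((\<lambda>i. mat2 (LS_x S i) 0 0 (LS_x T i)),
     (\<lambda>i. mat2 (LS_y S i) 0 0 (LS_y T i)))"

definition peak_in :: "nat \<Rightarrow> nat set \<Rightarrow> nat \<Rightarrow> bool" where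
  "peak_in r X' j \<longleftrightarrow> (2 * j) mod (2 * r) \<in> X'"

definition assocX :: "nat \<Rightarrow> nat set \<Rightarrow> nat set" where
  "assocX r X' = {i \<in> {1..2*r}. \<exists>j<r.
      (i = 2*j+1 \<and> ((peak_in r X' j \<and> peak_in r X' (j+1)) \<or>
                    (peak_in r X' j \<and> \<not> peak_in r X' (j+1)))) \<or>
      (i = 2*j+2 \<and> ((peak_in r X' j \<and> \<not> peak_in r X' (j+1)) \<or>
                    (\<not> peak_in r X' j \<and> \<not> peak_in r X' (j+1))))}"

definition assocY :: "nat \<Rightarrow> nat set \<Rightarrow> nat set" where
  "assocY r X' = {1..2*r} - assocX r X'"

definition cyc_consecutive :: "nat set \<Rightarrow> nat \<Rightarrow> nat \<Rightarrow> bool" where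
  "cyc_consecutive Os p q \<longleftrightarrow> p \<in> Os \<and> q \<in> Os \<and> p \<noteq> q \<and>
     (if p < q then \<not> (\<exists>m\<in>Os. p < m \<and> m < q)
      else \<not> (\<exists>m\<in>Os. p < m \<or> m < q))"

end

theory Submission
  imports Defs
begin

lemma X_dvd_iff: "(fps_X::complex fps) dvd f \<longleftrightarrow> fps_nth f 0 = 0"
proof
  assume "fps_X dvd f" then obtain g where "f = fps_X * g" by blast
  then show "fps_nth f 0 = 0" by simp
next
  assume "fps_nth f 0 = 0"
  then have "f = fps_X * fps_shift 1 f"
    by (metis div_le_dividend div_self fps_shift_mult_right
    fps_shift_times_fps_X' mult_eq_0_iff nth_subdegree_zero_iff)
  then show "fps_X dvd f" by (metis dvd_triv_left)
qed
lemma mat2_dims[simp]: "dim_row (mat2 a b c d) = 2" "dim_col (mat2 a b c d) = 2"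
  by (simp_all add: mat2_def mat_of_rows_list_def)
lemma mat2_carrier[simp]: "mat2 a b c d \<in> carrier_mat 2 2"
  by (rule carrier_matI) simp_all
lemma mat2_idx[simp]: "mat2 a b c d $$ (0,0) = a" "mat2 a b c d $$ (0,1) = b" "mat2 a b c d $$ (1,0) = c" "mat2 a b c d $$ (1,1) = d"
  by (simp_all add: mat2_def mat_of_rows_list_def)
lemma mat2_idx'[simp]: "mat2 a b c d $$ (0,Suc 0) = b" "mat2 a b c d $$ (Suc 0,0) = c" "mat2 a b c d $$ (Suc 0,Suc 0) = d"
  by (simp_all add: mat2_def mat_of_rows_list_def)
lemma less2: "(i::nat) < 2 \<Longrightarrow> i = 0 \<or> i = 1" by auto
lemma mat2_eqI:
  assumes "A \<in> carrier_mat 2 2" "A $$ (0,0) = a" "A $$ (0,1) = b" "A $$ (1,0) = c" "A $$ (1,1) = d"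
  shows "A = mat2 a b c d"
proof (rule eq_matI)
  fix i j assume "i < dim_row (mat2 a b c d)" "j < dim_col (mat2 a b c d)"
  then have "i = 0 \<or> i = 1" "j = 0 \<or> j = 1" using less2 by simp_all
  then show "A $$ (i,j) = mat2 a b c d $$ (i,j)" using assms by auto
qed (use assms in auto)
lemma mat2_eq_iff: "mat2 a b c d = mat2 a' b' c' d' \<longleftrightarrow> a=a' \<and> b=b' \<and> c=c' \<and> d=d'"
  by (metis mat2_idx)
lemma mat2_mult: "mat2 (a::'a::comm_ring_1) b c d * mat2 e f g h = mat2 (a*e+b*g) (a*f+b*h) (c*e+d*g) (c*f+d*h)"
  apply (rule mat2_eqI)
  apply (auto simp: scalar_prod_def row_def col_def numeral_2_eq_2)
  done
lemma mat2_one: "1\<^sub>m 2 = (mat2 1 0 0 1 :: 'a::comm_ring_1 mat)"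
  by (rule mat2_eqI) auto

definition Podd :: "complex fps \<Rightarrow> complex fps \<Rightarrow> complex fps \<Rightarrow> complex fps mat" where
  "Podd m u \<beta> = mat2 (\<beta> - m) (\<beta> - m - u) 1 1"
definition Peven :: "complex fps \<Rightarrow> complex fps \<Rightarrow> complex fps \<Rightarrow> bool \<Rightarrow> complex fps mat" where
  "Peven m u \<beta> c = (if c then mat2 ((\<beta> - m) div fps_X) (\<beta> - m - u) 1 fps_X
                      else mat2 (\<beta> - m) ((\<beta> - m - u) div fps_X) fps_X 1)"
definition okc :: "complex fps \<Rightarrow> complex fps \<Rightarrow> complex fps \<Rightarrow> bool \<Rightarrow> bool" where
  "okc m u \<beta> c = (if c then fps_X dvd (\<beta> - m) else fps_X dvd (\<beta> - m - u))"
definition Dg :: "bool \<Rightarrow> complex fps mat" where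
  "Dg p = (if p then mat2 1 0 0 fps_X else mat2 fps_X 0 0 1)"
definition Dy :: "bool \<Rightarrow> complex fps mat" where
  "Dy p = (if p then mat2 fps_X 0 0 1 else mat2 1 0 0 fps_X)"

lemma Xshift: "(fps_X::complex fps) dvd a \<Longrightarrow> fps_X * fps_shift (Suc 0) a = a"
  by (metis X_dvd_iff div_le_dividend div_self fps_shift_mult_right
    fps_shift_times_fps_X' mult_eq_0_iff nth_subdegree_zero_iff One_nat_def)

lemma x_odd: "okc m u \<beta> c \<Longrightarrow> mat2 fps_X b 0 1 * Peven m u \<beta> c = Podd m u (\<beta>+b) * Dg c"
  by (cases c) (auto simp: okc_def Peven_def Podd_def Dg_def mat2_mult mat2_eq_iff algebra_simps Xshift)
lemma x_even: "okc m u (\<beta>+b) c \<Longrightarrow> mat2 1 b 0 fps_X * Podd m u \<beta> = Peven m u (\<beta>+b) c * Dg (\<not>c)"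
  by (cases c) (auto simp: okc_def Peven_def Podd_def Dg_def mat2_mult mat2_eq_iff algebra_simps Xshift)
lemma y_odd: "okc m u \<beta> c \<Longrightarrow> mat2 1 (-b) 0 fps_X * Podd m u (\<beta>+b) = Peven m u \<beta> c * Dy c"
  by (cases c) (auto simp: okc_def Peven_def Podd_def Dy_def mat2_mult mat2_eq_iff algebra_simps Xshift)
lemma y_even: "okc m u (\<beta>+b) c \<Longrightarrow> mat2 fps_X (-b) 0 1 * Peven m u (\<beta>+b) c = Podd m u \<beta> * Dy (\<not>c)"
  by (cases c) (auto simp: okc_def Peven_def Podd_def Dy_def mat2_mult mat2_eq_iff algebra_simps Xshift)
definition inv2 :: "complex fps \<Rightarrow> complex fps mat \<Rightarrow> complex fps mat" where
  "inv2 k A = mat2 (k * A $$ (1,1)) (-(k * A $$ (0,1))) (-(k * A $$ (1,0))) (k * A $$ (0,0))"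

lemma inv2_carrier[simp]: "inv2 k A \<in> carrier_mat 2 2" by (simp add: inv2_def)
lemma Podd_carrier[simp]: "Podd m u \<beta> \<in> carrier_mat 2 2" by (simp add: Podd_def)
lemma Peven_carrier[simp]: "Peven m u \<beta> c \<in> carrier_mat 2 2" by (simp add: Peven_def)
lemma Dg_carrier[simp]: "Dg c \<in> carrier_mat 2 2" by (simp add: Dg_def)
lemma Dy_carrier[simp]: "Dy c \<in> carrier_mat 2 2" by (simp add: Dy_def)

lemma inv2_mat2:
  assumes "k * (a*d - b*c) = 1"
  shows "mat2 a b c d * inv2 k (mat2 a b c d) = 1\<^sub>m 2 \<and> inv2 k (mat2 a b c d) * mat2 a b c d = 1\<^sub>m 2"
proof -
  have e: "k*a*d - k*b*c = 1" using assms by (simp add: algebra_simps)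
  show ?thesis unfolding inv2_def mat2_one
    by (simp add: mat2_mult mat2_eq_iff) (use e in \<open>simp_all add: algebra_simps\<close>)
qed

lemma Podd_inv: "k * u = 1 \<Longrightarrow> Podd m u \<beta> * inv2 k (Podd m u \<beta>) = 1\<^sub>m 2 \<and> inv2 k (Podd m u \<beta>) * Podd m u \<beta> = 1\<^sub>m 2"
  unfolding Podd_def by (rule inv2_mat2) (simp add: algebra_simps)

lemma Peven_inv: "k * u = 1 \<Longrightarrow> okc m u \<beta> c \<Longrightarrow> Peven m u \<beta> c * inv2 k (Peven m u \<beta> c) = 1\<^sub>m 2 \<and> inv2 k (Peven m u \<beta> c) * Peven m u \<beta> c = 1\<^sub>m 2"
  unfolding Peven_def okc_def
  by (cases c) (simp_all add: inv2_mat2 algebra_simps Xshift)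

lemma transport:
  fixes x :: "complex fps mat"
  assumes "x \<in> carrier_mat 2 2" "Pp \<in> carrier_mat 2 2" "Qp \<in> carrier_mat 2 2"
    "Pv \<in> carrier_mat 2 2" "Qi \<in> carrier_mat 2 2" "D \<in> carrier_mat 2 2"
    "Pp * Qp = 1\<^sub>m 2" "Qi * Pv = 1\<^sub>m 2" "x * Pp = Pv * D"
  shows "Qi * x = D * Qp"
proof -
  have c1: "Qi * x \<in> carrier_mat 2 2" using assms by simp
  have "Qi * x = Qi * x * (Pp * Qp)" using assms by (simp add: right_mult_one_mat[of "Qi * x" 2 2])
  also have "\<dots> = Qi * x * Pp * Qp" by (rule assoc_mult_mat[symmetric, of "Qi * x" 2 2 Pp 2 Qp 2]) (use assms c1 in auto)
  also have "\<dots> = Qi * (x * Pp) * Qp" using assms by (subst assoc_mult_mat[of Qi 2 2 x 2 Pp 2]) auto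
  also have "\<dots> = Qi * Pv * D * Qp" using assms by (subst assoc_mult_mat[of Qi 2 2 Pv 2 D 2]) auto
  also have "\<dots> = D * Qp" using assms by simp
  finally show ?thesis .
qed


lemma const_run:
  assumes "\<forall>m. p < m \<and> m < q \<longrightarrow> \<chi> m = \<chi> (Suc m)" "p < q"
  shows "\<chi> q = \<chi> (Suc p)"
proof -
  have "\<forall>d. Suc p + d \<le> q \<longrightarrow> \<chi> (Suc p + d) = \<chi> (Suc p)"
  proof
    fix d show "Suc p + d \<le> q \<longrightarrow> \<chi> (Suc p + d) = \<chi> (Suc p)"
      by (induction d) (use assms in auto)
  qed
  from this[rule_format, of "q - Suc p"] assms(2) show ?thesis by simp
qed

lemma comb:
  fixes \<chi> :: "nat \<Rightarrow> bool" and s :: "nat \<Rightarrow> complex"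
  assumes ex: "\<exists>j<r. \<chi> j \<noteq> \<chi> (Suc j)"
    and A1: "\<forall>j<r. \<chi> j = \<chi> (Suc j) \<longrightarrow> s j = 0"
    and A2: "\<forall>j<r. \<chi> j \<noteq> \<chi> (Suc j) \<longrightarrow> s j \<noteq> 0"
    and A3: "\<forall>p q. p < q \<and> q < r \<and> \<chi> p \<noteq> \<chi> (Suc p) \<and> \<chi> q \<noteq> \<chi> (Suc q)
              \<and> (\<forall>m. p < m \<and> m < q \<longrightarrow> \<chi> m = \<chi> (Suc m)) \<longrightarrow> s p + s q = 0"
  shows "\<exists>\<mu> \<tau>. \<tau> \<noteq> 0 \<and> (\<forall>j\<le>r. (\<Sum>l<j. s l) = \<mu> + (if \<chi> j then 0 else \<tau>))"
proof -
  define T where "T = {j. j < r \<and> \<chi> j \<noteq> \<chi> (Suc j)}"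
  have finT: "finite T" unfolding T_def by simp
  have neT: "T \<noteq> {}" using ex unfolding T_def by auto
  define p0 where "p0 = Min T"
  have p0T: "p0 \<in> T" using finT neT p0_def by simp
  define h where "h j = (if \<chi> j then (1::complex) else -1) * s j" for j
  define \<tau> where "\<tau> = h p0"
  have hT: "\<forall>q\<in>T. h q = \<tau>"
  proof
    fix q assume "q \<in> T"
    then show "h q = \<tau>"
    proof (induction q rule: less_induct)
      case (less q)
      show ?case
      proof (cases "q = p0")
        case True then show ?thesis by (simp add: \<tau>_def)
      next
        case False
        have "p0 \<le> q" using less.prems finT p0_def by simp
        with False have pq: "p0 < q" by simp
        define Tq where "Tq = {p\<in>T. p < q}"
        have finTq: "finite Tq" "Tq \<noteq> {}" using finT p0T pq unfolding Tq_def by auto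
        define p where "p = Max Tq"
        have pTq: "p \<in> Tq" using finTq p_def by simp
        have maxp: "\<forall>m\<in>Tq. m \<le> p" using finTq p_def by simp
        have ppq: "p < q" "p \<in> T" using pTq Tq_def by auto
        have qT: "q < r" "\<chi> q \<noteq> \<chi> (Suc q)" using less.prems T_def by auto
        have pT: "\<chi> p \<noteq> \<chi> (Suc p)" using ppq T_def by auto
        have run: "\<forall>m. p < m \<and> m < q \<longrightarrow> \<chi> m = \<chi> (Suc m)"
        proof (intro allI impI)
          fix m assume m: "p < m \<and> m < q"
          show "\<chi> m = \<chi> (Suc m)"
          proof (rule ccontr)
            assume "\<chi> m \<noteq> \<chi> (Suc m)"
            then have "m \<in> Tq" using m qT unfolding Tq_def T_def by auto
            then show False using maxp m by auto
          qed
        qed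
        have spq: "s p + s q = 0" using A3 ppq qT pT run by blast
        have cq: "\<chi> q = \<chi> (Suc p)" using const_run[OF run ppq(1)] .
        have "h p = h q" using spq cq pT unfolding h_def
          by (cases "\<chi> p"; cases "\<chi> q") (auto simp: add_eq_0_iff)
        moreover have "h p = \<tau>" using less.IH ppq by blast
        ultimately show ?thesis by simp
      qed
    qed
  qed
  have tau0: "\<tau> \<noteq> 0" using p0T A2 unfolding \<tau>_def h_def T_def by auto
  define g where "g j = (\<Sum>l<j. s l) - (if \<chi> j then 0 else \<tau>)" for j
  have step: "g (Suc j) = g j" if "j < r" for j
  proof (cases "\<chi> j = \<chi> (Suc j)")
    case True then show ?thesis using A1 that unfolding g_def by auto
  next
    case False
    then have "j \<in> T" using that T_def by auto
    then have "h j = \<tau>" using hT by blast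
    then show ?thesis using False unfolding g_def h_def by (cases "\<chi> j") auto
  qed
  have "\<forall>j\<le>r. g j = g 0"
  proof
    fix j show "j \<le> r \<longrightarrow> g j = g 0"
      by (induction j) (use step in auto)
  qed
  then have "\<forall>j\<le>r. (\<Sum>l<j. s l) = g 0 + (if \<chi> j then 0 else \<tau>)"
    unfolding g_def by (metis add_diff_cancel_left' add_diff_eq diff_add_cancel)
  then show ?thesis using tau0 by blast
qed

lemma memX_odd: "j < r \<Longrightarrow> (2*j+1 \<in> assocX r X') = peak_in r X' j"
  unfolding assocX_def by auto presburger+

lemma memX_even: "j < r \<Longrightarrow> (2*j+2 \<in> assocX r X') = (\<not> peak_in r X' (j+1))"
  unfolding assocX_def by auto presburger+

lemma Lsum_fst: "i \<in> {1..2*r} \<Longrightarrow> fst (Lsum (assocX r X') (assocY r X')) i = Dg (i \<in> assocX r X')"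
  by (auto simp: Lsum_def LS_x_def assocY_def Dg_def)

lemma Lsum_snd: "i \<in> {1..2*r} \<Longrightarrow> snd (Lsum (assocX r X') (assocY r X')) i = Dy (i \<in> assocX r X')"
  by (auto simp: Lsum_def LS_y_def assocY_def Dy_def)

theorem theorem3p7:
  fixes r :: nat and b :: "nat \<Rightarrow> complex fps" and X' :: "nat set"
  assumes "r \<ge> 2"
    and "(\<Sum>i=1..2*r. b i) = 0"
    and "X' \<subseteq> {p. even p \<and> p < 2*r}"
    and "1 \<le> card X'" and "card X' < r"
    and "\<forall>j<r. (peak_in r X' j \<longleftrightarrow> peak_in r X' (j+1))
                 \<longrightarrow> fps_X dvd (b (2*j+1) + b (2*j+2))"
    and "\<forall>j<r. (peak_in r X' j \<noteq> peak_in r X' (j+1))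
                 \<longrightarrow> \<not> fps_X dvd (b (2*j+1) + b (2*j+2))"
    and "\<forall>p q. cyc_consecutive {i \<in> {1..2*r}. odd i \<and> \<not> fps_X dvd (b i + b (i+1))} p q
                 \<longrightarrow> fps_X dvd (b p + b (p+1) + b q + b (q+1))"
  shows "rep2_iso (2*r) (MIJ b) (Lsum (assocX r X') (assocY r X'))"
proof -
  define \<chi> where "\<chi> j = peak_in r X' j" for j
  define B where "B i = (\<Sum>l=1..i. b l)" for i
  define s where "s j = fps_nth (b (2*j+1) + b (2*j+2)) 0" for j
  have Bsuc: "B (Suc i) = B i + b (Suc i)" for i by (simp add: B_def)
  have B0: "fps_nth (B (2*j)) 0 = (\<Sum>l<j. s l)" for j
  proof (induction j)
    case 0 then show ?case by (simp add: B_def)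
  next
    case (Suc j)
    have "B (2 * Suc j) = B (2*j) + b (2*j+1) + b (2*j+2)"
      using Bsuc[of "2*j"] Bsuc[of "Suc (2*j)"] by (simp add: algebra_simps)
    then show ?case using Suc by (simp add: s_def)
  qed
  have Br: "B (2*r) = 0" using assms(2) by (simp add: B_def)
  have chir: "\<chi> r = \<chi> 0" by (simp add: \<chi>_def peak_in_def)
  have finX: "finite X'" using assms(3) by (rule finite_subset) auto
  have ex: "\<exists>j<r. \<chi> j \<noteq> \<chi> (Suc j)"
  proof (rule ccontr)
    assume "\<not> ?thesis"
    then have allc: "\<forall>j<r. \<chi> j = \<chi> (Suc j)" by auto
    have all0: "\<chi> j = \<chi> 0" if "j < r" for j using that
      by (induction j) (use allc in auto)
    show False
    proof (cases "\<chi> 0")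
      case True
      have "(\<lambda>j. 2*j) ` {..<r} \<subseteq> X'"
      proof
        fix p assume "p \<in> (\<lambda>j. 2*j) ` {..<r}"
        then obtain j where j: "j < r" "p = 2*j" by auto
        then have "\<chi> j" using all0 True by auto
        then show "p \<in> X'" using j by (simp add: \<chi>_def peak_in_def)
      qed
      then have "card ((\<lambda>j. 2*j) ` {..<r}) \<le> card X'" using finX by (rule card_mono[rotated])
      moreover have "card ((\<lambda>j. 2*j) ` {..<r}) = r" by (simp add: card_image inj_on_def)
      ultimately show False using assms(5) by simp
    next
      case False
      have "X' = {}"
      proof (rule ccontr)
        assume "X' \<noteq> {}"
        then obtain p where p: "p \<in> X'" by auto
        then have pe: "even p" "p < 2*r" using assms(3) by auto
        then have "p div 2 < r" "2 * (p div 2) = p" by auto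
        then have "\<chi> (p div 2)" using p pe by (simp add: \<chi>_def peak_in_def)
        then show False using all0 \<open>p div 2 < r\<close> False by auto
      qed
      then show False using assms(4) by simp
    qed
  qed
  have A1: "\<forall>j<r. \<chi> j = \<chi> (Suc j) \<longrightarrow> s j = 0"
    using assms(6) by (auto simp: \<chi>_def s_def X_dvd_iff)
  have A2: "\<forall>j<r. \<chi> j \<noteq> \<chi> (Suc j) \<longrightarrow> s j \<noteq> 0"
    using assms(7) by (auto simp: \<chi>_def s_def X_dvd_iff)
  have A3: "\<forall>p q. p < q \<and> q < r \<and> \<chi> p \<noteq> \<chi> (Suc p) \<and> \<chi> q \<noteq> \<chi> (Suc q)
              \<and> (\<forall>m. p < m \<and> m < q \<longrightarrow> \<chi> m = \<chi> (Suc m)) \<longrightarrow> s p + s q = 0"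
  proof (intro allI impI)
    fix p q assume H: "p < q \<and> q < r \<and> \<chi> p \<noteq> \<chi> (Suc p) \<and> \<chi> q \<noteq> \<chi> (Suc q)
              \<and> (\<forall>m. p < m \<and> m < q \<longrightarrow> \<chi> m = \<chi> (Suc m))"
    define Os where "Os = {i \<in> {1..2*r}. odd i \<and> \<not> fps_X dvd (b i + b (i+1))}"
    have pO: "2*p+1 \<in> Os" using H assms(7) by (auto simp: Os_def \<chi>_def)
    have qO: "2*q+1 \<in> Os" using H assms(7) by (auto simp: Os_def \<chi>_def)
    have none: "\<not> (\<exists>m\<in>Os. 2*p+1 < m \<and> m < 2*q+1)"
    proof
      assume "\<exists>m\<in>Os. 2*p+1 < m \<and> m < 2*q+1"
      then obtain m where m: "m \<in> Os" "2*p+1 < m" "m < 2*q+1" by blast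
      then have "odd m" by (simp add: Os_def)
      then obtain m' where m': "m = 2*m'+1" by (metis oddE)
      have "p < m'" "m' < q" using m m' by auto
      then have "\<chi> m' = \<chi> (Suc m')" using H by blast
      then have "fps_X dvd (b (2*m'+1) + b (2*m'+2))" using assms(6) \<open>m' < q\<close> H
        by (auto simp: \<chi>_def)
      moreover have "\<not> fps_X dvd (b (2*m'+1) + b (2*m'+2))" using m(1) m'
        by (simp add: Os_def add.assoc)
      ultimately show False by blast
    qed
    have "cyc_consecutive Os (2*p+1) (2*q+1)"
      unfolding cyc_consecutive_def using pO qO none H by auto
    then have "fps_X dvd (b (2*p+1) + b (2*p+1+1) + b (2*q+1) + b (2*q+1+1))"
      using assms(8) unfolding Os_def by blast
    then show "s p + s q = 0" by (simp add: X_dvd_iff s_def add.assoc)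
  qed
  obtain \<mu> \<tau> where tau: "\<tau> \<noteq> 0" and mu: "\<forall>j\<le>r. (\<Sum>l<j. s l) = \<mu> + (if \<chi> j then 0 else \<tau>)"
    using comb[OF ex A1 A2 A3] by blast
  define m where "m = fps_const \<mu>"
  define u where "u = fps_const \<tau>"
  define k where "k = fps_const (inverse \<tau>)"
  have ku: "k * u = 1" proof -
    have "k * u = fps_const (inverse \<tau> * \<tau>)" by (simp add: k_def u_def)
    then show ?thesis using tau by simp
  qed
  have ok: "okc m u (B (2*j)) (\<chi> j)" if "j \<le> r" for j
    using mu that B0[of j] by (auto simp: okc_def X_dvd_iff m_def u_def)
  define P where "P i = (if odd i then Podd m u (B i) else Peven m u (B i) (\<chi> (i div 2)))" for i
  define Q where "Q i = inv2 k (P i)" for i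
  have Pc[simp]: "P i \<in> carrier_mat 2 2" for i by (simp add: P_def)
  have Qc[simp]: "Q i \<in> carrier_mat 2 2" for i by (simp add: Q_def)
  have PQ: "P i * Q i = 1\<^sub>m 2 \<and> Q i * P i = 1\<^sub>m 2" if "i \<le> 2*r" for i
  proof (cases "odd i")
    case True then show ?thesis using Podd_inv[OF ku] by (simp add: P_def Q_def)
  next
    case False
    then have "okc m u (B i) (\<chi> (i div 2))" using ok[of "i div 2"] that by auto
    then show ?thesis using Peven_inv[OF ku] False by (simp add: P_def Q_def)
  qed
  have Pprev: "P (prev_vertex (2*r) i) = (if odd (i-1) then Podd m u (B (i-1))
                 else Peven m u (B (i-1)) (\<chi> ((i-1) div 2)))" if "i \<in> {1..2*r}" for i
  proof (cases "i = 1")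
    case True
    then show ?thesis using Br chir by (simp add: prev_vertex_def P_def B_def)
  next
    case False
    then show ?thesis by (simp add: prev_vertex_def P_def)
  qed
  have prevle: "prev_vertex (2*r) i \<le> 2*r" if "i \<in> {1..2*r}" for i
    using that by (auto simp: prev_vertex_def)
  have main: "Q i * fst (MIJ b) i = fst (Lsum (assocX r X') (assocY r X')) i * Q (prev_vertex (2*r) i)
      \<and> Q (prev_vertex (2*r) i) * snd (MIJ b) i = snd (Lsum (assocX r X') (assocY r X')) i * Q i"
    if iI: "i \<in> {1..2*r}" for i
  proof -
    let ?p = "prev_vertex (2*r) i"
    have PQi: "P i * Q i = 1\<^sub>m 2" "Q i * P i = 1\<^sub>m 2" using PQ[of i] iI by auto
    have PQp: "P ?p * Q ?p = 1\<^sub>m 2" "Q ?p * P ?p = 1\<^sub>m 2" using PQ[OF prevle[OF iI]] by auto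
    have eqs: "fst (MIJ b) i * P ?p = P i * fst (Lsum (assocX r X') (assocY r X')) i
            \<and> snd (MIJ b) i * P i = P ?p * snd (Lsum (assocX r X') (assocY r X')) i"
    proof (cases "odd i")
      case True
      then obtain j where j: "i = 2*j+1" by (metis oddE)
      have jr: "j < r" using iI j by auto
      have Bi: "B i = B (2*j) + b i" using Bsuc[of "2*j"] j by simp
      have mem: "(i \<in> assocX r X') = \<chi> j" using memX_odd[OF jr] j by (simp add: \<chi>_def)
      have okj: "okc m u (B (2*j)) (\<chi> j)" using ok jr by simp
      have Pi: "P i = Podd m u (B (2*j) + b i)" using True Bi by (simp add: P_def)
      have Pp: "P ?p = Peven m u (B (2*j)) (\<chi> j)" using Pprev[OF iI] j by simp
      have Mx: "fst (MIJ b) i = mat2 fps_X (b i) 0 1" "snd (MIJ b) i = mat2 1 (- b i) 0 fps_X"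
        using True by (simp_all add: MIJ_def)
      have Lx: "fst (Lsum (assocX r X') (assocY r X')) i = Dg (\<chi> j)"
        "snd (Lsum (assocX r X') (assocY r X')) i = Dy (\<chi> j)"
        using Lsum_fst[OF iI] Lsum_snd[OF iI] mem by simp_all
      show ?thesis unfolding Pi Pp Mx Lx using x_odd[OF okj] y_odd[OF okj] by simp
    next
      case False
      have i1: "1 \<le> i" using iI by simp
      obtain j where j: "i = 2*j+2"
      proof
        show "i = 2*(i div 2 - 1) + 2" using False i1 by presburger
      qed
      have jr: "j < r" using iI j by auto
      have Bi: "B i = B (2*j+1) + b i" using Bsuc[of "2*j+1"] j by simp
      have mem: "(i \<in> assocX r X') = (\<not> \<chi> (j+1))" using memX_even[OF jr] j by (simp add: \<chi>_def)
      have okj: "okc m u (B (2*j+1) + b i) (\<chi> (j+1))" using ok[of "j+1"] jr Bi j by simp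
      have Pi: "P i = Peven m u (B (2*j+1) + b i) (\<chi> (j+1))" using False Bi j by (simp add: P_def)
      have Pp: "P ?p = Podd m u (B (2*j+1))" using Pprev[OF iI] j by simp
      have Mx: "fst (MIJ b) i = mat2 1 (b i) 0 fps_X" "snd (MIJ b) i = mat2 fps_X (- b i) 0 1"
        using False by (simp_all add: MIJ_def)
      have Lx: "fst (Lsum (assocX r X') (assocY r X')) i = Dg (\<not> \<chi> (j+1))"
        "snd (Lsum (assocX r X') (assocY r X')) i = Dy (\<not> \<chi> (j+1))"
        using Lsum_fst[OF iI] Lsum_snd[OF iI] mem by simp_all
      show ?thesis unfolding Pi Pp Mx Lx using x_even[OF okj] y_even[OF okj] by simp
    qed
    have m1: "fst (MIJ b) i \<in> carrier_mat 2 2" "snd (MIJ b) i \<in> carrier_mat 2 2" by (auto simp: MIJ_def)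
    have l1: "fst (Lsum (assocX r X') (assocY r X')) i \<in> carrier_mat 2 2"
             "snd (Lsum (assocX r X') (assocY r X')) i \<in> carrier_mat 2 2"
      using Lsum_fst[OF iI] Lsum_snd[OF iI] by auto
    show ?thesis
      using transport[OF m1(1) Pc Qc Pc Qc l1(1) PQp(1) PQi(2)] eqs
        transport[OF m1(2) Pc Qc Pc Qc l1(2) PQi(1) PQp(2)] by blast
  qed
  have invQ: "Q i \<in> carrier_mat 2 2 \<and> invertible_mat (Q i)" if iI: "i \<in> {1..2*r}" for i
  proof -
    have d: "dim_row (Q i) = 2" "dim_col (Q i) = 2" "dim_row (P i) = 2"
      using carrier_matD[OF Qc[of i]] carrier_matD[OF Pc[of i]] by auto
    have pq: "P i * Q i = 1\<^sub>m 2" "Q i * P i = 1\<^sub>m 2" using PQ[of i] iI by auto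
    have "inverts_mat (Q i) (P i)" unfolding inverts_mat_def d(1) by (rule pq(2))
    moreover have "inverts_mat (P i) (Q i)" unfolding inverts_mat_def d(3) by (rule pq(1))
    moreover have "square_mat (Q i)" using d by simp
    ultimately have "invertible_mat (Q i)" unfolding invertible_mat_def by (intro conjI exI)
    then show ?thesis by simp
  qed
  have e1: "\<forall>i\<in>{1..2*r}. Q i * fst (MIJ b) i = fst (Lsum (assocX r X') (assocY r X')) i * Q (prev_vertex (2*r) i)"
    using main by (intro ballI) (rule conjunct1)
  have e2: "\<forall>i\<in>{1..2*r}. Q (prev_vertex (2*r) i) * snd (MIJ b) i = snd (Lsum (assocX r X') (assocY r X')) i * Q i"
    using main by (intro ballI) (rule conjunct2)
  have e0: "\<forall>i\<in>{1..2*r}. Q i \<in> carrier_mat 2 2 \<and> invertible_mat (Q i)"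
    using invQ by (intro ballI)
  show ?thesis unfolding rep2_iso_def
    by (rule exI[of _ Q], intro conjI e0 e1 e2)
qed

end
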